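(* Let $k$ be a positive integer and suppose that $a/b$ and $x/y$ are adjacent vertices of $\mathcal F_k$. Then every neighbor of $a/b$ in $\mathcal F_k$ has the form $\frac{x+am}{y+bm}$ for some $m\in\mathbb Z$.
   Context: The vertex set $V$ consists of all reduced fractions $p/q$ with $p,q\in\mathbb Z$, $\gcd(p,q)=1$, together with $1/0$; here $p/q$ and $(-p)/(-q)$ denote the same vertex. For vertices define $d(p/q,a/b)=|pb-qa|$. The graph $\mathcal F_k$ has vertex set $V$, with an edge between $p/q$ and $a/b$ exactly when $d(p/q,a/b)=k$. *)

theory Defs
  imports Main
begin

text \<open>A vertex p/q is represented by an integer pair (p,q) with gcd(p,q)=1
  (this includes 1/0 and excludes (0,0)); the pairs (p,q) and (-p,-q)
  represent the same vertex.\<close>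

definition is_vertex :: "int \<times> int \<Rightarrow> bool" where
  "is_vertex P \<longleftrightarrow> coprime (fst P) (snd P)"

definition same_vertex :: "int \<times> int \<Rightarrow> int \<times> int \<Rightarrow> bool" where
  "same_vertex P Q \<longleftrightarrow> P = Q \<or> P = (- fst Q, - snd Q)"

definition fdist :: "int \<times> int \<Rightarrow> int \<times> int \<Rightarrow> int" where
  "fdist P Q = \<bar>fst P * snd Q - snd P * fst Q\<bar>"

definition adjF :: "int \<Rightarrow> int \<times> int \<Rightarrow> int \<times> int \<Rightarrow> bool" where
  "adjF k P Q \<longleftrightarrow> is_vertex P \<and> is_vertex Q \<and> fdist P Q = k"

end

theory Submission
  imports Defs
begin

lemma key:
  fixes a b x y u v :: int
  assumes cop: "coprime a b" and eq: "a * v - b * u = a * y - b * x"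
  shows "\<exists>m. u = x + a * m \<and> v = y + b * m"
proof -
  have e: "a * (v - y) = b * (u - x)" using eq by (simp add: algebra_simps)
  hence "a dvd b * (u - x)" by (metis dvd_triv_left)
  hence "a dvd (u - x)" using cop by (simp add: coprime_dvd_mult_right_iff)
  then obtain m where m: "u - x = a * m" by blast
  show ?thesis
  proof (cases "a = 0")
    case True
    then have "is_unit b" using cop by simp
    then have "\<bar>b\<bar> = 1" by (simp add: zdvd1_eq)
    then have b2: "b * b = 1" using abs_mult_self_eq[of b] by simp
    have "u = x" using m True by simp
    moreover have "v = y + b * (b * (v - y))"
    proof -
      have "b * (b * (v - y)) = (b * b) * (v - y)" by (simp only: mult.assoc)
      also have "\<dots> = v - y" using b2 by simp
      finally show ?thesis by (metis diff_add_cancel add.commute)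
    qed
    ultimately show ?thesis using True by (intro exI[of _ "b * (v - y)"]) simp
  next
    case False
    have "a * (v - y) = a * (b * m)" using e m by (simp add: algebra_simps)
    hence "v - y = b * m" using False by simp
    thus ?thesis using m by (intro exI[of _ m]) simp
  qed
qed

theorem lemma2p2:
  fixes k a b x y u v :: int
  assumes "k > 0"
    and "adjF k (a, b) (x, y)"
    and "adjF k (a, b) (u, v)"
  shows "\<exists>m::int. same_vertex (u, v) (x + a * m, y + b * m)"
proof -
  have cop: "coprime a b" and h1: "\<bar>a * y - b * x\<bar> = k" and h2: "\<bar>a * v - b * u\<bar> = k"
    using assms by (auto simp: adjF_def is_vertex_def fdist_def)
  have "\<exists>u' v'. same_vertex (u, v) (u', v') \<and> a * v' - b * u' = a * y - b * x"
  proof (cases "a * v - b * u = a * y - b * x")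
    case True
    then show ?thesis by (intro exI[of _ u] exI[of _ v]) (simp add: same_vertex_def)
  next
    case False
    then have "a * (-v) - b * (-u) = a * y - b * x" using h1 h2 by (simp add: abs_eq_iff)
    then show ?thesis by (intro exI[of _ "-u"] exI[of _ "-v"]) (simp add: same_vertex_def)
  qed
  then obtain u' v' where s: "same_vertex (u, v) (u', v')" and e: "a * v' - b * u' = a * y - b * x"
    by blast
  from key[OF cop e] obtain m where "u' = x + a * m" "v' = y + b * m" by blast
  with s show ?thesis by blast
qed

end
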